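(* Let $d\geq 1$ and let $\mathcal{W}_d=\{(\lambda_1,\dots,\lambda_d)\in\mathbb{Z}^d : \lambda_1>\dots>\lambda_d\}$, viewed as a graph in which two vertices are adjacent iff they are at Euclidean distance $1$, with rank $r(\lambda)=\sum_{i=1}^d\lambda_i-\binom{d+1}{2}$. Let $\mu,\lambda\in\mathcal{W}_d$ with $r(\mu)\leq r(\lambda)$, and let $W_0,W_1,W_2,\dots$ be any sequence of words in the two letters $L,R$ such that $W_n$ contains exactly $n$ letters $L$ and exactly $n+r(\lambda)-r(\mu)$ letters $R$. Then $$\sum_{n\geq 0} Z_d(W_n;\mu,\lambda)\frac{x^{2n+r(\lambda)-r(\mu)}}{n!\,(n+r(\lambda)-r(\mu))!}=\det\big(I_{\lambda_i-\mu_j}(2x)\big)_{1\leq i,j\leq d}.$$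
   Context: For a word $W=L^{b_k}R^{a_k}\cdots L^{b_1}R^{a_1}$, $Z_d(W;\mu,\lambda)$ is the number of walks in the graph $\mathcal{W}_d$ from $\mu$ to $\lambda$ that consist of $a_1$ rank-increasing steps, then $b_1$ rank-decreasing steps, then $a_2$ rank-increasing steps, then $b_2$ rank-decreasing steps, and so on, ending with $b_k$ rank-decreasing steps (a step goes between adjacent vertices and changes the rank by $+1$ or $-1$). $I_k$ denotes the modified Bessel function of integer order $k$: for $k\geq 0$, $I_k(2x)=\sum_{n\geq 0}\frac{x^{2n+k}}{n!\,(n+k)!}$, and $I_{-k}=I_k$. *)

theory Defs
  imports Complex_Main "Jordan_Normal_Form.Determinant"
begin

definition inW :: "nat \<Rightarrow> int list \<Rightarrow> bool" where
  "inW d v \<longleftrightarrow> length v = d \<and> sorted_wrt (>) v"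

definition adjW :: "int list \<Rightarrow> int list \<Rightarrow> bool" where
  "adjW u v \<longleftrightarrow> length u = length v \<and> (\<Sum>i<length u. (u!i - v!i)^2) = 1"

definition rankW :: "nat \<Rightarrow> int list \<Rightarrow> int" where
  "rankW d v = sum_list v - int ((d + 1) choose 2)"

datatype letter = L | R

text \<open>A word is written as a list of letters, left to right as on paper.
  It is read from right to left: the last letter gives the first step.
  Letter R = rank-increasing step, L = rank-decreasing step.\<close>
definition walksW :: "nat \<Rightarrow> letter list \<Rightarrow> int list \<Rightarrow> int list \<Rightarrow> int list list set" where
  "walksW d w mu la = {ps. length ps = length w + 1 \<and> ps ! 0 = mu \<and> ps ! length w = la \<and>
      (\<forall>j\<le>length w. inW d (ps ! j)) \<and>
      (\<forall>j<length w. adjW (ps ! j) (ps ! Suc j) \<and>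
         rankW d (ps ! Suc j) = rankW d (ps ! j) + (if w ! (length w - 1 - j) = R then 1 else -1))}"

definition Z :: "nat \<Rightarrow> letter list \<Rightarrow> int list \<Rightarrow> int list \<Rightarrow> nat" where
  "Z d w mu la = card (walksW d w mu la)"

definition besselI :: "int \<Rightarrow> real \<Rightarrow> real" where
  "besselI k y = (\<Sum>n. (y/2)^(2*n + nat \<bar>k\<bar>) / (fact n * fact (n + nat \<bar>k\<bar>)))"

end

theory Submission
  imports Defs "HOL-Computational_Algebra.Formal_Power_Series"
begin

notation fps_nth (infixl "$f" 75)


definition st :: "letter \<Rightarrow> int" where "st s = (if s = R then 1 else -1)"

fun fw :: "nat \<Rightarrow> letter list \<Rightarrow> (nat \<Rightarrow> int) \<Rightarrow> nat" where
  "fw d [] v = (if \<forall>i<d. v i = 0 then 1 else 0)"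
| "fw d (s#w) v = (\<Sum>i<d. fw d w (v(i := v i - st s)))"

lemma fw_cong: "(\<And>i. i < d \<Longrightarrow> v i = v' i) \<Longrightarrow> fw d w v = fw d w v'"
proof (induction w arbitrary: v v')
  case Nil then show ?case by simp
next
  case (Cons s w)
  show ?case unfolding fw.simps
    by (rule sum.cong[OF refl], rule Cons.IH) (auto simp: Cons.prems)
qed

lemma fw_perm: "\<tau> permutes {..<d} \<Longrightarrow> fw d w (v \<circ> \<tau>) = fw d w v"
proof (induction w arbitrary: v)
  case Nil
  have "(\<forall>i<d. v (\<tau> i) = 0) \<longleftrightarrow> (\<forall>i<d. v i = 0)"
    using Nil permutes_in_image[OF Nil] by (metis lessThan_iff permutes_inverses(1) permutes_in_image)
  then show ?case by simp
next
  case (Cons s w)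
  have inj: "inj \<tau>" using Cons.prems permutes_inj by blast
  have "fw d (s#w) (v \<circ> \<tau>) = (\<Sum>i<d. fw d w ((v(\<tau> i := v (\<tau> i) - st s)) \<circ> \<tau>))"
    unfolding fw.simps
    by (rule sum.cong[OF refl], rule arg_cong[where f="fw d w"]) (auto simp: fun_eq_iff inj_eq[OF inj])
  also have "\<dots> = (\<Sum>i<d. fw d w (v(\<tau> i := v (\<tau> i) - st s)))"
    by (rule sum.cong[OF refl]) (rule Cons.IH[OF Cons.prems])
  also have "\<dots> = (\<Sum>i<d. fw d w (v(i := v i - st s)))"
    using sum.permute[OF Cons.prems, of "\<lambda>i. fw d w (v(i := v i - st s))"] by (simp add: o_def)
  also have "\<dots> = fw d (s#w) v" by simp
  finally show ?case .
qed

lemma fw_swap: "fw d (a#b#w) v = fw d (b#a#w) v"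
proof -
  have "fw d (a#b#w) v = (\<Sum>i<d. \<Sum>j<d. fw d w ((v(i := v i - st a))(j := (v(i := v i - st a)) j - st b)))"
    by simp
  also have "\<dots> = (\<Sum>j<d. \<Sum>i<d. fw d w ((v(i := v i - st a))(j := (v(i := v i - st a)) j - st b)))"
    by (rule sum.swap)
  also have "\<dots> = (\<Sum>j<d. \<Sum>i<d. fw d w ((v(j := v j - st b))(i := (v(j := v j - st b)) i - st a)))"
    by (intro sum.cong refl arg_cong[where f="fw d w"]) (auto simp: fun_eq_iff)
  also have "\<dots> = fw d (b#a#w) v" by simp
  finally show ?thesis .
qed

lemma fw_Cons_cong: "(\<And>v. fw d u v = fw d u' v) \<Longrightarrow> fw d (s#u) v = fw d (s#u') v"
  by simp

lemma fw_move: "fw d (xs @ a # ys) v = fw d (a # xs @ ys) v"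
proof (induction xs arbitrary: v)
  case Nil then show ?case by simp
next
  case (Cons x xs)
  have "fw d ((x#xs) @ a # ys) v = fw d (x # a # xs @ ys) v"
    unfolding append_Cons by (rule fw_Cons_cong, rule Cons.IH)
  also have "\<dots> = fw d (a # x # xs @ ys) v" by (rule fw_swap)
  finally show ?case by simp
qed

lemma fw_mset: "mset w = mset w' \<Longrightarrow> fw d w v = fw d w' v"
proof (induction w arbitrary: w' v)
  case Nil then show ?case by simp
next
  case (Cons a w)
  have "a \<in> set w'" using Cons.prems by (metis list.set_intros(1) set_mset_mset)
  then obtain xs ys where w': "w' = xs @ a # ys" by (meson split_list)
  have "mset w = mset (xs @ ys)" using Cons.prems w' by simp
  then have "fw d (a#w) v = fw d (a # xs @ ys) v"
    using Cons.IH by (intro fw_Cons_cong) auto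
  also have "\<dots> = fw d w' v" using w' fw_move by simp
  finally show ?case .
qed

lemma sum_upd: "i < (d::nat) \<Longrightarrow> (\<Sum>j<d. (v(i := x)) j) = (\<Sum>j<d. v j) - v i + (x::int)"
proof -
  assume i: "i < d"
  have "(\<Sum>j<d. (v(i := x)) j) = (v(i:=x)) i + (\<Sum>j\<in>{..<d}-{i}. (v(i := x)) j)"
    using sum.remove[of "{..<d}" i "v(i:=x)"] i by simp
  also have "(\<Sum>j\<in>{..<d}-{i}. (v(i := x)) j) = (\<Sum>j\<in>{..<d}-{i}. v j)"
    by (rule sum.cong) auto
  also have "(\<Sum>j<d. v j) = v i + (\<Sum>j\<in>{..<d}-{i}. v j)"
    using i by (simp add: sum.remove)
  ultimately show ?thesis by simp
qed

lemma fw_sum: "fw d w v \<noteq> 0 \<Longrightarrow> (\<Sum>i<d. v i) = int (count_list w R) - int (count_list w L)"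
proof (induction w arbitrary: v)
  case Nil
  then show ?case by (simp split: if_splits)
next
  case (Cons s w)
  then obtain i where i: "i < d" "fw d w (v(i := v i - st s)) \<noteq> 0"
    by (auto elim: sum.not_neutral_contains_not_neutral)
  from Cons.IH[OF i(2)] sum_upd[OF i(1)] show ?case
    by (cases s) (auto simp: st_def)
qed



fun hw :: "nat \<Rightarrow> nat \<Rightarrow> (nat \<Rightarrow> int) \<Rightarrow> nat" where
  "hw d 0 v = (if \<forall>i<d. v i = 0 then 1 else 0)"
| "hw d (Suc N) v = (\<Sum>i<d. hw d N (v(i := v i - 1)) + hw d N (v(i := v i + 1)))"

lemma letter_UNIV: "(UNIV :: letter set) = {L, R}"
  using letter.exhaust by auto

lemma finite_letter_UNIV: "finite (UNIV :: letter set)"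
  by (simp add: letter_UNIV)

lemma finite_words: "finite {w :: letter list. length w = N}"
  using finite_lists_length_eq[OF finite_letter_UNIV, of N] by simp

lemma words_Suc: "{w :: letter list. length w = Suc N} = Cons R ` {w. length w = N} \<union> Cons L ` {w. length w = N}"
proof -
  have "\<And>w. length w = Suc N \<Longrightarrow> w \<in> Cons R ` {w. length w = N} \<union> Cons L ` {w. length w = N}"
  proof -
    fix w :: "letter list" assume "length w = Suc N"
    then obtain s u where "w = s # u" "length u = N" by (metis length_Suc_conv)
    then show "w \<in> Cons R ` {w. length w = N} \<union> Cons L ` {w. length w = N}"
      by (cases s) auto
  qed
  then show ?thesis by auto
qed

lemma hw_words: "hw d N v = (\<Sum>w\<in>{w. length w = N}. fw d w v)"
proof (induction N arbitrary: v)
  case 0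
  have "{w :: letter list. length w = 0} = {[]}" by auto
  then show ?case by simp
next
  case (Suc N)
  let ?S = "{w :: letter list. length w = N}"
  have "(\<Sum>w\<in>{w. length w = Suc N}. fw d w v) = (\<Sum>w\<in>Cons R ` ?S. fw d w v) + (\<Sum>w\<in>Cons L ` ?S. fw d w v)"
    unfolding words_Suc by (rule sum.union_disjoint) (auto simp: finite_words)
  also have "\<dots> = (\<Sum>w\<in>?S. fw d (R#w) v) + (\<Sum>w\<in>?S. fw d (L#w) v)"
    by (subst (1 2) sum.reindex) (auto simp: o_def)
  also have "\<dots> = (\<Sum>i<d. hw d N (v(i := v i - 1))) + (\<Sum>i<d. hw d N (v(i := v i + 1)))"
  proof -
    have "(\<Sum>w\<in>?S. fw d (R#w) v) = (\<Sum>w\<in>?S. \<Sum>i<d. fw d w (v(i := v i - 1)))"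
      by (simp add: st_def)
    also have "\<dots> = (\<Sum>i<d. \<Sum>w\<in>?S. fw d w (v(i := v i - 1)))" by (rule sum.swap)
    also have "\<dots> = (\<Sum>i<d. hw d N (v(i := v i - 1)))" by (simp only: Suc.IH)
    finally have 1: "(\<Sum>w\<in>?S. fw d (R#w) v) = (\<Sum>i<d. hw d N (v(i := v i - 1)))" .
    have "(\<Sum>w\<in>?S. fw d (L#w) v) = (\<Sum>w\<in>?S. \<Sum>i<d. fw d w (v(i := v i + 1)))"
      by (simp add: st_def)
    also have "\<dots> = (\<Sum>i<d. \<Sum>w\<in>?S. fw d w (v(i := v i + 1)))" by (rule sum.swap)
    also have "\<dots> = (\<Sum>i<d. hw d N (v(i := v i + 1)))" by (simp only: Suc.IH)
    finally have 2: "(\<Sum>w\<in>?S. fw d (L#w) v) = (\<Sum>i<d. hw d N (v(i := v i + 1)))" .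
    show ?thesis using 1 2 by simp
  qed
  also have "\<dots> = hw d (Suc N) v" by (simp add: sum.distrib)
  finally show ?case by simp
qed

lemma count_LR: "count_list w L + count_list w R = length (w :: letter list)"
proof (induction w)
  case Nil then show ?case by simp
next
  case (Cons s w) then show ?case by (cases s) auto
qed

lemma card_words_count: "card {w :: letter list. length w = N \<and> count_list w L = n} = N choose n"
proof (induction N arbitrary: n)
  case 0
  have "{w :: letter list. length w = 0 \<and> count_list w L = n} = (if n = 0 then {[]} else {})" by auto
  then show ?case by simp
next
  case (Suc N)
  show ?case
  proof (cases n)
    case 0
    have "{w :: letter list. length w = Suc N \<and> count_list w L = 0} = Cons R ` {w. length w = N \<and> count_list w L = 0}"
    proof -
      have "\<And>w. length w = Suc N \<Longrightarrow> count_list w L = 0 \<Longrightarrow> w \<in> Cons R ` {w. length w = N \<and> count_list w L = 0}"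
      proof -
        fix w :: "letter list" assume a: "length w = Suc N" "count_list w L = 0"
        then obtain s u where "w = s # u" "length u = N" by (metis length_Suc_conv)
        with a show "w \<in> Cons R ` {w. length w = N \<and> count_list w L = 0}"
          by (cases s) auto
      qed
      then show ?thesis by auto
    qed
    then show ?thesis using Suc.IH[of 0] 0 by (simp add: card_image)
  next
    case (Suc m)
    have "{w :: letter list. length w = Suc N \<and> count_list w L = Suc m} =
      Cons R ` {w. length w = N \<and> count_list w L = Suc m} \<union> Cons L ` {w. length w = N \<and> count_list w L = m}"
    proof -
      have "\<And>w. length w = Suc N \<Longrightarrow> count_list w L = Suc m \<Longrightarrow> w \<in> Cons R ` {w. length w = N \<and> count_list w L = Suc m} \<union> Cons L ` {w. length w = N \<and> count_list w L = m}"
      proof -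
        fix w :: "letter list" assume a: "length w = Suc N" "count_list w L = Suc m"
        then obtain s u where "w = s # u" "length u = N" by (metis length_Suc_conv)
        with a show "w \<in> Cons R ` {w. length w = N \<and> count_list w L = Suc m} \<union> Cons L ` {w. length w = N \<and> count_list w L = m}"
          by (cases s) auto
      qed
      then show ?thesis by auto
    qed
    moreover have "finite {w :: letter list. length w = N \<and> count_list w L = k}" for k
      by (rule finite_subset[OF _ finite_words[of N]]) auto
    ultimately have "card {w :: letter list. length w = Suc N \<and> count_list w L = Suc m} =
       card (Cons R ` {w :: letter list. length w = N \<and> count_list w L = Suc m}) + card (Cons L ` {w :: letter list. length w = N \<and> count_list w L = m})"
      by (simp only:) (rule card_Un_disjoint, auto)
    then have "card {w :: letter list. length w = Suc N \<and> count_list w L = Suc m} =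
       card {w :: letter list. length w = N \<and> count_list w L = Suc m} + card {w :: letter list. length w = N \<and> count_list w L = m}"
      by (simp add: card_image)
    then show ?thesis using Suc.IH Suc by simp
  qed
qed

lemma hw_eq:
  assumes "(\<Sum>i<d. v i) = int k" "count_list W L = n" "count_list W R = n + k"
  shows "hw d (2*n+k) v = ((2*n+k) choose n) * fw d W v"
proof -
  let ?N = "2*n+k"
  let ?S = "{w :: letter list. length w = ?N}"
  let ?T = "{w :: letter list. length w = ?N \<and> count_list w L = n}"
  have "hw d ?N v = (\<Sum>w\<in>?S. fw d w v)" by (rule hw_words)
  also have "\<dots> = (\<Sum>w\<in>?T. fw d w v)"
  proof (rule sum.mono_neutral_right)
    show "finite ?S" by (rule finite_words)
    show "?T \<subseteq> ?S" by auto
    show "\<forall>w\<in>?S - ?T. fw d w v = 0"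
    proof
      fix w assume w: "w \<in> ?S - ?T"
      show "fw d w v = 0"
      proof (rule ccontr)
        assume "fw d w v \<noteq> 0"
        from fw_sum[OF this] assms(1) count_LR[of w] w show False by auto
      qed
    qed
  qed
  also have "\<dots> = (\<Sum>w\<in>?T. fw d W v)"
  proof (rule sum.cong[OF refl])
    fix w assume w: "w \<in> ?T"
    have "mset w = mset W"
    proof (rule multiset_eqI)
      fix x show "count (mset w) x = count (mset W) x"
        using w count_LR[of w] assms(2,3) by (cases x) (auto simp: count_mset)
    qed
    then show "fw d w v = fw d W v" by (rule fw_mset)
  qed
  also have "\<dots> = (?N choose n) * fw d W v" by (simp add: card_words_count)
  finally show ?thesis .
qed

lemma hw_par: "hw d N v \<noteq> 0 \<Longrightarrow> \<bar>\<Sum>i<d. v i\<bar> \<le> int N \<and> even (int N + (\<Sum>i<d. v i))"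
proof (induction N arbitrary: v)
  case 0
  then show ?case by (simp split: if_splits)
next
  case (Suc N)
  then obtain i where i: "i < d" "hw d N (v(i := v i - 1)) \<noteq> 0 \<or> hw d N (v(i := v i + 1)) \<noteq> 0"
    by (auto elim: sum.not_neutral_contains_not_neutral)
  from i(2) show ?case
  proof
    assume h: "hw d N (v(i := v i - 1)) \<noteq> 0"
    from Suc.IH[OF h] sum_upd[OF i(1), of v] show ?case by auto
  next
    assume h: "hw d N (v(i := v i + 1)) \<noteq> 0"
    from Suc.IH[OF h] sum_upd[OF i(1), of v] show ?case by auto
  qed
qed



lemma sum_list_upd_int: "i < length xs \<Longrightarrow> sum_list (xs[i := x]) = sum_list xs - xs!i + (x::int)"
proof (induction xs arbitrary: i)
  case Nil then show ?case by simp
next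
  case (Cons a xs) then show ?case by (cases i) auto
qed

lemma sum_list_nth_int: "sum_list (xs :: int list) = (\<Sum>i<length xs. xs!i)"
  by (simp add: sum_list_sum_nth lessThan_atLeast0)

lemma letter_idx1: "j < length w \<Longrightarrow> (s#w)!(length (s#w) - 1 - j) = w!(length w - 1 - j)"
  by (simp add: nth_Cons' Suc_diff_Suc)

lemma letter_idx2: "(s#w)!(length (s#w) - 1 - length w) = s"
  by simp

lemma adj_step:
  assumes "i < length nu" "c = 1 \<or> c = -1"
  shows "adjW (nu[i := nu!i - c]) nu \<and> rankW d nu = rankW d (nu[i := nu!i - c]) + c"
proof
  have "(\<Sum>j<length nu. ((nu[i := nu!i - c])!j - nu!j)^2) = (\<Sum>j<length nu. if j = i then 1 else 0)"
    by (rule sum.cong[OF refl]) (use assms in \<open>auto simp: nth_list_update\<close>)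
  also have "\<dots> = 1" using assms(1) by simp
  finally show "adjW (nu[i := nu!i - c]) nu" unfolding adjW_def by simp
  show "rankW d nu = rankW d (nu[i := nu!i - c]) + c"
    unfolding rankW_def using sum_list_upd_int[OF assms(1), of "nu!i - c"] by simp
qed

lemma adj_inv:
  assumes len: "length u = length nu" and adj: "adjW u nu" and rk: "rankW d nu = rankW d u + c"
  shows "\<exists>i<length nu. u = nu[i := nu!i - c]"
proof -
  let ?n = "length nu"
  let ?f = "\<lambda>j. u!j - nu!j"
  have S: "(\<Sum>j<?n. (?f j)^2) = 1" using adj len unfolding adjW_def by simp
  obtain i where i: "i < ?n" "?f i \<noteq> 0"
  proof (rule ccontr)
    assume "\<not> thesis"
    then have "\<forall>j<?n. ?f j = 0" using that by blast
    then have "(\<Sum>j<?n. (?f j)^2) = 0" by simp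
    with S show False by simp
  qed
  have split: "(\<Sum>j<?n. (?f j)^2) = (?f i)^2 + (\<Sum>j\<in>{..<?n}-{i}. (?f j)^2)"
    using sum.remove[of "{..<?n}" i "\<lambda>j. (?f j)^2"] i by simp
  have nn: "(\<Sum>j\<in>{..<?n}-{i}. (?f j)^2) \<ge> 0" by (rule sum_nonneg) simp
  have ge1: "(?f i)^2 \<ge> 1" using i(2)
    by (metis abs_square_eq_1 abs_zero dual_order.refl int_one_le_iff_zero_less linorder_not_le one_le_power power2_less_eq_zero_iff zero_less_abs_iff)
  have rest0: "(\<Sum>j\<in>{..<?n}-{i}. (?f j)^2) = 0" using S split nn ge1 by linarith
  then have oth: "\<forall>j\<in>{..<?n}-{i}. ?f j = 0"
    using sum_nonneg_eq_0_iff[of "{..<?n}-{i}" "\<lambda>j. (?f j)^2"] by simp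
  have "sum_list u - sum_list nu = (\<Sum>j<?n. ?f j)"
    using len by (simp add: sum_list_nth_int sum_subtractf)
  also have "\<dots> = ?f i + (\<Sum>j\<in>{..<?n}-{i}. ?f j)"
    using sum.remove[of "{..<?n}" i ?f] i by simp
  also have "(\<Sum>j\<in>{..<?n}-{i}. ?f j) = 0" using oth by simp
  finally have "?f i = sum_list u - sum_list nu" by simp
  moreover have "sum_list nu = sum_list u + c" using rk unfolding rankW_def by simp
  ultimately have fi: "u!i = nu!i - c" by simp
  have "u = nu[i := nu!i - c]"
  proof (rule nth_equalityI)
    show "length u = length (nu[i := nu ! i - c])" using len by simp
    fix j assume "j < length u"
    then show "u!j = nu[i := nu ! i - c] ! j"
      using oth fi len by (cases "j = i") (auto simp: nth_list_update)
  qed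
  with i show ?thesis by blast
qed

definition Uset :: "nat \<Rightarrow> letter \<Rightarrow> int list \<Rightarrow> int list set" where
  "Uset d s nu = {u. inW d u \<and> inW d nu \<and> adjW u nu \<and> rankW d nu = rankW d u + st s}"

lemma walks_Cons:
  "walksW d (s#w) mu nu = (\<Union>u\<in>Uset d s nu. (\<lambda>ps. ps @ [nu]) ` walksW d w mu u)"
proof (rule Set.set_eqI, rule iffI)
  let ?m = "length w"
  fix ps' assume H: "ps' \<in> walksW d (s#w) mu nu"
  then have len: "length ps' = Suc (Suc ?m)" by (simp add: walksW_def)
  then obtain ys y where ps': "ps' = ys @ [y]" and ly: "length ys = Suc ?m"
    by (metis length_Suc_conv_rev)
  have nth: "\<And>j. j \<le> ?m \<Longrightarrow> ps'!j = ys!j" using ps' ly by (simp add: nth_append)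
  have y: "y = nu" using H ps' ly by (simp add: walksW_def nth_append)
  have c0: "ps'!0 = mu" and c1: "\<And>j. j \<le> Suc ?m \<Longrightarrow> inW d (ps'!j)"
    and c2: "\<And>j. j < Suc ?m \<Longrightarrow> adjW (ps'!j) (ps'!Suc j) \<and>
         rankW d (ps'!Suc j) = rankW d (ps'!j) + (if (s#w)!(length (s#w) - 1 - j) = R then 1 else -1)"
    using H by (auto simp: walksW_def)
  have last: "ps'!Suc ?m = nu" using ps' ly y by (simp add: nth_append)
  let ?u = "ys!?m"
  have "ys \<in> walksW d w mu ?u"
    unfolding walksW_def
  proof (intro CollectI conjI allI impI)
    show "length ys = length w + 1" using ly by simp
    show "ys!0 = mu" using c0 nth[of 0] by simp
    show "ys!length w = ?u" by simp
    fix j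
    { assume "j \<le> length w" then show "inW d (ys!j)" using c1[of j] nth[of j] by simp }
    { assume j: "j < length w"
      then show "adjW (ys!j) (ys!Suc j)" using c2[of j] nth[of j] nth[of "Suc j"] by simp
      show "rankW d (ys!Suc j) = rankW d (ys!j) + (if w!(length w - 1 - j) = R then 1 else -1)"
        using c2[of j] nth[of j] nth[of "Suc j"] j letter_idx1[OF j, of s] by simp }
  qed
  moreover have "?u \<in> Uset d s nu"
    unfolding Uset_def using c1[of ?m] c1[of "Suc ?m"] c2[of ?m] nth[of ?m] last letter_idx2[of s w]
    by (simp add: st_def)
  ultimately show "ps' \<in> (\<Union>u\<in>Uset d s nu. (\<lambda>ps. ps @ [nu]) ` walksW d w mu u)"
    using ps' y by blast
next
  let ?m = "length w"
  fix ps' assume "ps' \<in> (\<Union>u\<in>Uset d s nu. (\<lambda>ps. ps @ [nu]) ` walksW d w mu u)"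
  then obtain u ps where u: "u \<in> Uset d s nu" and ps: "ps \<in> walksW d w mu u" and ps': "ps' = ps @ [nu]"
    by blast
  have ly: "length ps = Suc ?m" using ps by (simp add: walksW_def)
  have nth: "\<And>j. j \<le> ?m \<Longrightarrow> ps'!j = ps!j" using ps' ly by (simp add: nth_append)
  have last: "ps'!Suc ?m = nu" using ps' ly by (simp add: nth_append)
  have d0: "ps!0 = mu" and d0': "ps!?m = u" and d1: "\<And>j. j \<le> ?m \<Longrightarrow> inW d (ps!j)"
    and d2: "\<And>j. j < ?m \<Longrightarrow> adjW (ps!j) (ps!Suc j) \<and>
         rankW d (ps!Suc j) = rankW d (ps!j) + (if w!(length w - 1 - j) = R then 1 else -1)"
    using ps by (auto simp: walksW_def)
  have U: "inW d u" "inW d nu" "adjW u nu" "rankW d nu = rankW d u + st s" using u by (auto simp: Uset_def)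
  show "ps' \<in> walksW d (s#w) mu nu"
    unfolding walksW_def
  proof (intro CollectI conjI allI impI)
    show "length ps' = length (s#w) + 1" using ps' ly by simp
    show "ps'!0 = mu" using nth[of 0] d0 by simp
    show "ps'!length (s#w) = nu" using last by simp
    fix j
    { assume j: "j \<le> length (s#w)"
      show "inW d (ps'!j)"
      proof (cases "j \<le> ?m")
        case True then show ?thesis using nth d1 by simp
      next
        case False then have "j = Suc ?m" using j by simp
        then show ?thesis using last U by simp
      qed }
    { assume j: "j < length (s#w)"
      have "adjW (ps'!j) (ps'!Suc j) \<and> rankW d (ps'!Suc j) = rankW d (ps'!j) + (if (s#w)!(length (s#w) - 1 - j) = R then 1 else -1)"
      proof (cases "j < ?m")
        case True then show ?thesis using nth[of j] nth[of "Suc j"] d2[of j] letter_idx1[OF True, of s] by simp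
      next
        case False then have "j = ?m" using j by simp
        then show ?thesis using nth[of ?m] last d0' U letter_idx2[of s w] by (simp add: st_def)
      qed
      then show "adjW (ps'!j) (ps'!Suc j)" "rankW d (ps'!Suc j) = rankW d (ps'!j) + (if (s#w)!(length (s#w) - 1 - j) = R then 1 else -1)"
        by auto }
  qed
qed



lemma st_pm: "st s = 1 \<or> st s = -1" by (simp add: st_def)

lemma Uset_sub: "Uset d s nu \<subseteq> (\<lambda>i. nu[i := nu!i - st s]) ` {..<d}"
proof
  fix u assume u: "u \<in> Uset d s nu"
  then have l: "length u = length nu" "length nu = d" and a: "adjW u nu" and r: "rankW d nu = rankW d u + st s"
    by (auto simp: Uset_def inW_def)
  from adj_inv[OF l(1) a r] l show "u \<in> (\<lambda>i. nu[i := nu!i - st s]) ` {..<d}" by auto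
qed

lemma finite_Uset: "finite (Uset d s nu)"
  by (rule finite_subset[OF Uset_sub]) simp

lemma walks_Nil: "walksW d [] mu nu = (if nu = mu \<and> inW d mu then {[mu]} else {})"
proof -
  have "\<And>ps. length ps = 1 \<Longrightarrow> ps = [ps!0]"
    by (metis One_nat_def length_0_conv length_Suc_conv nth_Cons_0)
  then show ?thesis unfolding walksW_def by (auto; metis)
qed

lemma finite_walks: "finite (walksW d w mu nu)"
proof (induction w arbitrary: nu)
  case Nil then show ?case by (simp add: walks_Nil)
next
  case (Cons s w)
  show ?case unfolding walks_Cons using Cons.IH finite_Uset by blast
qed

lemma walks_last: "ps \<in> walksW d w mu u \<Longrightarrow> ps ! length w = u"
  by (simp add: walksW_def)

lemma Z_Cons: "Z d (s#w) mu nu = (\<Sum>u\<in>Uset d s nu. Z d w mu u)"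
proof -
  have "Z d (s#w) mu nu = card (\<Union>u\<in>Uset d s nu. (\<lambda>ps. ps @ [nu]) ` walksW d w mu u)"
    unfolding Z_def walks_Cons ..
  also have "\<dots> = (\<Sum>u\<in>Uset d s nu. card ((\<lambda>ps. ps @ [nu]) ` walksW d w mu u))"
  proof (rule card_UN_disjoint)
    show "finite (Uset d s nu)" by (rule finite_Uset)
    show "\<forall>u\<in>Uset d s nu. finite ((\<lambda>ps. ps @ [nu]) ` walksW d w mu u)" using finite_walks by blast
    show "\<forall>u\<in>Uset d s nu. \<forall>u'\<in>Uset d s nu. u \<noteq> u' \<longrightarrow>
      (\<lambda>ps. ps @ [nu]) ` walksW d w mu u \<inter> (\<lambda>ps. ps @ [nu]) ` walksW d w mu u' = {}"
    proof (intro ballI impI)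
      fix u u' :: "int list" assume "u \<in> Uset d s nu" "u' \<in> Uset d s nu" and uu: "u \<noteq> u'"
      { fix ps ps' assume a: "ps \<in> walksW d w mu u" "ps' \<in> walksW d w mu u'" "ps @ [nu] = ps' @ [nu]"
        then have "ps = ps'" by simp
        with a have False using walks_last[OF a(1)] walks_last[OF a(2)] uu by simp }
      then show "(\<lambda>ps. ps @ [nu]) ` walksW d w mu u \<inter> (\<lambda>ps. ps @ [nu]) ` walksW d w mu u' = {}"
        by blast
    qed
  qed
  also have "\<dots> = (\<Sum>u\<in>Uset d s nu. Z d w mu u)"
    by (rule sum.cong[OF refl]) (simp add: Z_def card_image inj_on_def)
  finally show ?thesis .
qed

lemma Uset_eq:
  assumes "inW d nu"
  shows "Uset d s nu = (\<lambda>i. nu[i := nu!i - st s]) ` {i. i < d \<and> inW d (nu[i := nu!i - st s])}"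
proof
  show "Uset d s nu \<subseteq> (\<lambda>i. nu[i := nu!i - st s]) ` {i. i < d \<and> inW d (nu[i := nu!i - st s])}"
  proof
    fix u assume u: "u \<in> Uset d s nu"
    then obtain i where "i < d" "u = nu[i := nu!i - st s]" using Uset_sub by blast
    with u show "u \<in> (\<lambda>i. nu[i := nu!i - st s]) ` {i. i < d \<and> inW d (nu[i := nu!i - st s])}"
      by (auto simp: Uset_def)
  qed
  show "(\<lambda>i. nu[i := nu!i - st s]) ` {i. i < d \<and> inW d (nu[i := nu!i - st s])} \<subseteq> Uset d s nu"
  proof
    fix u assume "u \<in> (\<lambda>i. nu[i := nu!i - st s]) ` {i. i < d \<and> inW d (nu[i := nu!i - st s])}"
    then obtain i where i: "i < d" "inW d (nu[i := nu!i - st s])" "u = nu[i := nu!i - st s]" by blast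
    have "i < length nu" using i assms by (simp add: inW_def)
    from adj_step[OF this st_pm, where d=d] i assms show "u \<in> Uset d s nu" by (simp add: Uset_def)
  qed
qed

lemma Z_Cons':
  assumes "inW d nu"
  shows "Z d (s#w) mu nu = (\<Sum>i\<in>{i. i < d \<and> inW d (nu[i := nu!i - st s])}. Z d w mu (nu[i := nu!i - st s]))"
proof -
  have inj: "inj_on (\<lambda>i. nu[i := nu!i - st s]) {i. i < d \<and> inW d (nu[i := nu!i - st s])}"
  proof (rule inj_onI)
    fix i j assume i: "i \<in> {i. i < d \<and> inW d (nu[i := nu!i - st s])}" and j: "j \<in> {i. i < d \<and> inW d (nu[i := nu!i - st s])}"
      and eq: "nu[i := nu!i - st s] = nu[j := nu!j - st s]"
    have l: "i < length nu" "j < length nu" using i j assms by (auto simp: inW_def)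
    show "i = j"
    proof (rule ccontr)
      assume "i \<noteq> j"
      then have "nu[i := nu!i - st s] ! i = nu[j := nu!j - st s] ! i" using eq by simp
      with \<open>i \<noteq> j\<close> l have "nu!i - st s = nu!i" by (simp add: nth_list_update)
      then show False using st_pm[of s] by auto
    qed
  qed
  show ?thesis unfolding Z_Cons Uset_eq[OF assms] sum.reindex[OF inj] by (simp add: o_def)
qed

lemma Z_Nil: "inW d mu \<Longrightarrow> Z d [] mu nu = (if nu = mu then 1 else 0)"
  by (simp add: Z_def walks_Nil)



definition Aw :: "nat \<Rightarrow> letter list \<Rightarrow> int list \<Rightarrow> int list \<Rightarrow> real" where
  "Aw d w mu nu = (\<Sum>p\<in>{p. p permutes {0..<d}}. of_int (sign p) * real (fw d w (\<lambda>i. nu!i - mu!p i)))"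

lemma Aw_zero:
  assumes ab: "a < d" "b < d" "a \<noteq> b" and eq: "nu!a = nu!b"
  shows "Aw d w mu nu = 0"
proof -
  let ?t = "transpose a b"
  let ?f = "\<lambda>p. of_int (sign p) * real (fw d w (\<lambda>i. nu!i - mu!p i))"
  have tp: "?t permutes {0..<d}" using ab by (intro permutes_swap_id) auto
  have tp': "?t permutes {..<d}" using tp by (simp add: lessThan_atLeast0)
  have "Aw d w mu nu = (\<Sum>p\<in>{p. p permutes {0..<d}}. ?f (p \<circ> ?t))"
    unfolding Aw_def by (rule sum_permutations_compose_right[OF tp])
  also have "\<dots> = (\<Sum>p\<in>{p. p permutes {0..<d}}. - ?f p)"
  proof (rule sum.cong[OF refl])
    fix p assume "p \<in> {p. p permutes {0..<d}}"
    then have p: "p permutes {0..<d}" by simp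
    have "sign (p \<circ> ?t) = sign p * sign ?t"
      by (rule sign_compose) (auto intro: permutes_imp_permutation[OF _ p] permutes_imp_permutation[OF _ tp])
    then have s: "sign (p \<circ> ?t) = - sign p" using ab by (simp add: sign_swap_id)
    have nu: "nu!(?t i) = nu!i" for i using eq by (auto simp: transpose_def)
    have "(\<lambda>i. nu!i - mu!(p \<circ> ?t) i) = (\<lambda>i. nu!i - mu!p i) \<circ> ?t"
      by (auto simp: fun_eq_iff nu)
    then have "fw d w (\<lambda>i. nu!i - mu!(p \<circ> ?t) i) = fw d w (\<lambda>i. nu!i - mu!p i)"
      using fw_perm[OF tp'] by simp
    then show "?f (p \<circ> ?t) = - ?f p" using s by simp
  qed
  also have "\<dots> = - Aw d w mu nu" unfolding Aw_def by (simp add: sum_negf)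
  finally show ?thesis by simp
qed

lemma strict_mono_perm_aux:
  fixes p :: "nat \<Rightarrow> nat"
  assumes p: "p permutes {..<d}" and mono: "\<And>i j. i < j \<Longrightarrow> j < d \<Longrightarrow> p i < p j"
  shows "i \<le> d \<Longrightarrow> \<forall>j<i. p j = j"
  proof (induction i)
    case 0 then show ?case by simp
  next
    case (Suc i)
    then have IH: "\<forall>j<i. p j = j" and i: "i < d" by auto
    have pi: "p i < d" using p i permutes_in_image by fastforce
    have "p i = i"
    proof (rule ccontr)
      assume ne: "p i \<noteq> i"
      show False
      proof (cases "p i < i")
        case True
        then have "p (p i) = p i" using IH by simp
        then have "p i = i" using permutes_inj[OF p] by (meson injD)
        with ne show False by simp
      next
        case False
        then have gt: "p i > i" using ne by simp
        obtain k where k: "k < d" "p k = i"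
          using p i by (metis lessThan_iff permutes_inverses(1) permutes_in_image)
        have "k \<noteq> i" using k ne by auto
        show False
        proof (cases "k < i")
          case True then show False using IH k by auto
        next
          case False then have "k > i" using \<open>k \<noteq> i\<close> by simp
          then have "p k > p i" using mono k(1) by simp
          then show False using k gt by simp
        qed
      qed
    qed
    then show ?case using IH less_Suc_eq by auto
  qed

lemma strict_mono_perm_id:
  fixes p :: "nat \<Rightarrow> nat"
  assumes p: "p permutes {..<d}" and mono: "\<And>i j. i < j \<Longrightarrow> j < d \<Longrightarrow> p i < p j"
  shows "p = id"
proof -
  have "\<forall>j<d. p j = j" using strict_mono_perm_aux[OF p mono, of d] by simp
  moreover have "\<forall>j. j \<ge> d \<longrightarrow> p j = j" using p by (simp add: permutes_not_in)
  ultimately show ?thesis by (metis eq_id_iff not_le)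
qed

lemma perm_match_id:
  assumes mu: "inW d mu" and nu: "inW d nu" and p: "p permutes {0..<d}"
    and m: "\<forall>i<d. nu!i = mu!p i"
  shows "p = id"
proof (rule strict_mono_perm_id)
  show p': "p permutes {..<d}" using p by (simp add: lessThan_atLeast0)
  fix i j assume ij: "i < j" "j < d"
  have pd: "p i < d" "p j < d" using p' ij permutes_in_image by fastforce+
  have "nu!j < nu!i" using nu ij by (simp add: inW_def sorted_wrt_iff_nth_less)
  then have lt: "mu!p j < mu!p i" using m ij by simp
  show "p i < p j"
  proof (rule ccontr)
    assume "\<not> p i < p j"
    then have "p j < p i \<or> p j = p i" by auto
    then show False
    proof
      assume "p j < p i"
      then have "mu!p i < mu!p j" using mu pd by (simp add: inW_def sorted_wrt_iff_nth_less)
      with lt show False by simp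
    next
      assume "p j = p i" with lt show False by simp
    qed
  qed
qed

lemma Aw_Nil:
  assumes mu: "inW d mu" and nu: "inW d nu"
  shows "Aw d [] mu nu = (if nu = mu then 1 else 0)"
proof -
  have "Aw d [] mu nu = (\<Sum>p\<in>{p. p permutes {0..<d}}. if p = id \<and> nu = mu then 1 else 0)"
    unfolding Aw_def
  proof (rule sum.cong[OF refl])
    fix p assume "p \<in> {p. p permutes {0..<d}}"
    then have p: "p permutes {0..<d}" by simp
    show "of_int (sign p) * real (fw d [] (\<lambda>i. nu!i - mu!p i)) = (if p = id \<and> nu = mu then 1 else 0)"
    proof (cases "\<forall>i<d. nu!i = mu!p i")
      case True
      then have pid: "p = id" using perm_match_id[OF mu nu p] by simp
      then have "nu = mu" using True mu nu by (auto simp: inW_def intro: nth_equalityI)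
      then show ?thesis using pid True by simp
    next
      case False
      then have "p \<noteq> id \<or> nu \<noteq> mu" by auto
      then show ?thesis using False by auto
    qed
  qed
  also have "\<dots> = (if nu = mu then 1 else 0)"
    by (simp add: permutes_id finite_permutations)
  finally show ?thesis .
qed

lemma Aw_Cons:
  assumes "length nu = d"
  shows "Aw d (s#w) mu nu = (\<Sum>i<d. Aw d w mu (nu[i := nu!i - st s]))"
proof -
  have "Aw d (s#w) mu nu = (\<Sum>p\<in>{p. p permutes {0..<d}}. \<Sum>i<d. of_int (sign p) * real (fw d w (\<lambda>j. (nu[i := nu!i - st s])!j - mu!p j)))"
    unfolding Aw_def
  proof (rule sum.cong[OF refl])
    fix p
    have "\<And>i. i < d \<Longrightarrow> (\<lambda>j. nu!j - mu!p j)(i := nu!i - mu!p i - st s) = (\<lambda>j. (nu[i := nu!i - st s])!j - mu!p j)"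
      using assms by (auto simp: fun_eq_iff nth_list_update)
    then show "of_int (sign p) * real (fw d (s#w) (\<lambda>i. nu!i - mu!p i)) = (\<Sum>i<d. of_int (sign p) * real (fw d w (\<lambda>j. (nu[i := nu!i - st s])!j - mu!p j)))"
      by (simp add: sum_distrib_left)
  qed
  also have "\<dots> = (\<Sum>i<d. Aw d w mu (nu[i := nu!i - st s]))"
    unfolding Aw_def by (rule sum.swap)
  finally show ?thesis .
qed

lemma not_inW_eq:
  assumes nu: "inW d nu" and i: "i < d" and c: "c = 1 \<or> c = -1" and n: "\<not> inW d (nu[i := nu!i - c])"
  shows "\<exists>a b. a < d \<and> b < d \<and> a \<noteq> b \<and> nu[i := nu!i - c]!a = nu[i := nu!i - c]!b"
proof -
  let ?n = "nu[i := nu!i - c]"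
  have l: "length nu = d" using nu by (simp add: inW_def)
  have s: "\<And>a b. a < b \<Longrightarrow> b < d \<Longrightarrow> nu!b < nu!a" using nu by (simp add: inW_def sorted_wrt_iff_nth_less)
  from n l obtain a b where ab: "a < b" "b < d" "\<not> ?n!b < ?n!a"
    by (auto simp: inW_def sorted_wrt_iff_nth_less)
  have ad: "a < d" using ab by simp
  consider "a = i" | "b = i" | "a \<noteq> i \<and> b \<noteq> i" by blast
  then show ?thesis
  proof cases
    case 1
    then have "?n!a = nu!a - c" "?n!b = nu!b" using ab l by (auto simp: nth_list_update)
    moreover have "nu!b < nu!a" using s ab by simp
    ultimately have "?n!a = ?n!b" using ab(3) c by auto
    then show ?thesis using ab ad by (metis less_irrefl)
  next
    case 2
    then have "?n!b = nu!b - c" "?n!a = nu!a" using ab l by (auto simp: nth_list_update)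
    moreover have "nu!b < nu!a" using s ab by simp
    ultimately have "?n!a = ?n!b" using ab(3) c by auto
    then show ?thesis using ab ad by (metis less_irrefl)
  next
    case 3
    then have "?n!b = nu!b" "?n!a = nu!a" using ab l by (auto simp: nth_list_update)
    moreover have "nu!b < nu!a" using s ab by simp
    ultimately show ?thesis using ab(3) by simp
  qed
qed

lemma Z_eq_Aw:
  assumes mu: "inW d mu"
  shows "inW d nu \<Longrightarrow> real (Z d w mu nu) = Aw d w mu nu"
proof (induction w arbitrary: nu)
  case Nil
  then show ?case using Z_Nil[OF mu] Aw_Nil[OF mu Nil] by simp
next
  case (Cons s w)
  let ?G = "{i. i < d \<and> inW d (nu[i := nu!i - st s])}"
  have "real (Z d (s#w) mu nu) = (\<Sum>i\<in>?G. real (Z d w mu (nu[i := nu!i - st s])))"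
    using Z_Cons'[OF Cons.prems] by simp
  also have "\<dots> = (\<Sum>i\<in>?G. Aw d w mu (nu[i := nu!i - st s]))"
    using Cons.IH by simp
  also have "\<dots> = (\<Sum>i<d. Aw d w mu (nu[i := nu!i - st s]))"
  proof (rule sum.mono_neutral_left)
    show "finite {..<d}" by simp
    show "?G \<subseteq> {..<d}" by auto
    show "\<forall>i\<in>{..<d} - ?G. Aw d w mu (nu[i := nu!i - st s]) = 0"
    proof
      fix i assume "i \<in> {..<d} - ?G"
      then have i: "i < d" "\<not> inW d (nu[i := nu!i - st s])" by auto
      from not_inW_eq[OF Cons.prems i(1) st_pm i(2)] obtain a b where
        "a < d" "b < d" "a \<noteq> b" "nu[i := nu!i - st s]!a = nu[i := nu!i - st s]!b" by blast
      then show "Aw d w mu (nu[i := nu!i - st s]) = 0" by (rule Aw_zero)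
    qed
  qed
  also have "\<dots> = Aw d (s#w) mu nu"
    using Aw_Cons[of nu d s w mu] Cons.prems by (simp add: inW_def)
  finally show ?case .
qed




lemma fact_Suc_div: "of_nat (Suc n) * (h / fact (Suc n)) = (h::real) / fact n"
proof -
  have "(fact (Suc n) :: real) = of_nat (Suc n) * fact n" by (simp only: fact_Suc of_nat_mult)
  moreover have "(of_nat (Suc n) :: real) \<noteq> 0" by (simp only: of_nat_eq_0_iff)
  ultimately show ?thesis by (simp del: of_nat_Suc)
qed

lemma fid: "(x::real)>0 \<Longrightarrow> y>0 \<Longrightarrow> ra>0 \<Longrightarrow> rb>0 \<Longrightarrow> (ra+rb)/((ra*x)*(rb*y)) = 1/(x*(rb*y)) + 1/((ra*x)*y)"
  by (simp add: field_simps)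

lemma fid2: "(of_nat a + of_nat b) / (fact a * fact b) = 1 / (fact (a - 1) * fact b) + 1 / (fact a * fact (b - 1) :: real)" if "a = Suc a'" "b = Suc b'"
proof -
  have "(fact a :: real) = of_nat a * fact a'" "(fact b :: real) = of_nat b * fact b'" using that by (simp_all only: fact_Suc of_nat_mult)
  moreover have "a - 1 = a'" "b - 1 = b'" using that by simp_all
  moreover have "(fact a' :: real) > 0" "(fact b' :: real) > 0" "real a > 0" "real b > 0" using that by auto
  ultimately show ?thesis using fid by simp
qed

definition bc :: "int \<Rightarrow> nat \<Rightarrow> real" where
  "bc c N = (if even (int N + c) \<and> \<bar>c\<bar> \<le> int N
     then 1 / (fact (nat ((int N + c) div 2)) * fact (nat ((int N - c) div 2))) else 0)"

lemma bc_val: "bc (int a - int b) (a + b) = 1 / (fact a * fact b)"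
proof -
  have e: "even (int (a + b) + (int a - int b))" by simp
  have l: "\<bar>int a - int b\<bar> \<le> int (a + b)" by simp
  have 1: "nat ((int (a + b) + (int a - int b)) div 2) = a" by simp
  have 2: "nat ((int (a + b) - (int a - int b)) div 2) = b" by simp
  show ?thesis unfolding bc_def using e l 1 2 by simp
qed

lemma bc_ex: "bc c N \<noteq> 0 \<Longrightarrow> \<exists>a b. N = a + b \<and> c = int a - int b"
proof -
  assume h: "bc c N \<noteq> 0"
  then have e: "even (int N + c)" and l: "\<bar>c\<bar> \<le> int N" by (auto simp: bc_def split: if_splits)
  from e obtain t where t: "int N + c = 2 * t" by (metis dvdE)
  have "t \<ge> 0" "int N - t \<ge> 0" using t l by auto
  then show ?thesis using t
    by (intro exI[of _ "nat t"] exI[of _ "nat (int N - t)"]) auto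
qed

lemma bc_zero: "\<not> (\<exists>a b. N = a + b \<and> c = int a - int b) \<Longrightarrow> bc c N = 0"
  using bc_ex by blast

lemma bc_deriv: "of_nat (Suc N) * bc c (Suc N) = bc (c - 1) N + bc (c + 1) N"
proof (cases "\<exists>a b. Suc N = a + b \<and> c = int a - int b")
  case True
  then obtain a b where ab: "Suc N = a + b" "c = int a - int b" by blast
  have lhs: "of_nat (Suc N) * bc c (Suc N) = of_nat (a + b) / (fact a * fact b)"
    using bc_val[of a b] ab by simp
  have t1: "bc (c - 1) N = (if a = 0 then 0 else 1 / (fact (a - 1) * fact b))"
  proof (cases a)
    case 0
    have "\<not> (\<exists>a' b'. N = a' + b' \<and> c - 1 = int a' - int b')" using ab 0 by auto
    then show ?thesis using bc_zero 0 by simp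
  next
    case (Suc a')
    then have "N = a' + b" "c - 1 = int a' - int b" using ab by auto
    then show ?thesis using bc_val[of a' b] Suc by simp
  qed
  have t2: "bc (c + 1) N = (if b = 0 then 0 else 1 / (fact a * fact (b - 1)))"
  proof (cases b)
    case 0
    have "\<not> (\<exists>a' b'. N = a' + b' \<and> c + 1 = int a' - int b')" using ab 0 by auto
    then show ?thesis using bc_zero 0 by simp
  next
    case (Suc b')
    then have "N = a + b'" "c + 1 = int a - int b'" using ab by auto
    then show ?thesis using bc_val[of a b'] Suc by simp
  qed
  show ?thesis
  proof (cases a)
    case 0
    then obtain b' where b': "b = Suc b'" using ab by (cases b) auto
    have "of_nat (a + b) / (fact a * fact b) = (1::real) / fact b'"
      using 0 b' fact_Suc_div[of b' 1] by simp
    then show ?thesis unfolding lhs t1 t2 using 0 b' by simp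
  next
    case (Suc a')
    show ?thesis
    proof (cases b)
      case 0
      have "of_nat (a + b) / (fact a * fact b) = (1::real) / fact a'"
        using 0 Suc fact_Suc_div[of a' 1] by simp
      then show ?thesis unfolding lhs t1 t2 using 0 Suc by simp
    next
      case (Suc b')
      have "of_nat (a + b) / (fact a * fact b) = (of_nat a + of_nat b) / (fact a * fact b :: real)" by simp
      also have "\<dots> = 1 / (fact (a - 1) * fact b) + 1 / (fact a * fact (b - 1))"
        by (rule fid2[OF \<open>a = Suc a'\<close> Suc])
      finally show ?thesis unfolding lhs t1 t2 using \<open>a = Suc a'\<close> Suc by simp
    qed
  qed
next
  case False
  then have "bc c (Suc N) = 0" by (rule bc_zero)
  moreover have "bc (c - 1) N = 0"
  proof (rule bc_zero, rule notI)
    assume "\<exists>a b. N = a + b \<and> c - 1 = int a - int b"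
    then obtain a b where "N = a + b" "c - 1 = int a - int b" by blast
    then have "Suc N = Suc a + b \<and> c = int (Suc a) - int b" by auto
    with False show False by blast
  qed
  moreover have "bc (c + 1) N = 0"
  proof (rule bc_zero, rule notI)
    assume "\<exists>a b. N = a + b \<and> c + 1 = int a - int b"
    then obtain a b where "N = a + b" "c + 1 = int a - int b" by blast
    then have "Suc N = a + Suc b \<and> c = int a - int (Suc b)" by auto
    with False show False by blast
  qed
  ultimately show ?thesis by simp
qed

definition B :: "int \<Rightarrow> real fps" where "B c = Abs_fps (bc c)"

lemma B_deriv: "fps_deriv (B c) = B (c - 1) + B (c + 1)"
  by (rule fps_ext) (simp add: B_def bc_deriv[simplified])

lemma Bnth0: "B c $f 0 = (if c = 0 then 1 else 0)"
  by (simp add: B_def bc_def)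

definition P :: "nat \<Rightarrow> (nat \<Rightarrow> int) \<Rightarrow> real fps" where
  "P d v = Abs_fps (\<lambda>N. real (hw d N v) / fact N)"

lemma P_deriv: "fps_deriv (P d v) = (\<Sum>i<d. P d (v(i := v i - 1)) + P d (v(i := v i + 1)))"
proof (rule fps_ext)
  fix n
  have "fps_deriv (P d v) $f n = of_nat (Suc n) * (real (hw d (Suc n) v) / fact (Suc n))"
    by (simp add: P_def del: hw.simps)
  also have "\<dots> = real (hw d (Suc n) v) / fact n"
    by (rule fact_Suc_div)
  also have "\<dots> = (\<Sum>i<d. real (hw d n (v(i := v i - 1))) / fact n + real (hw d n (v(i := v i + 1))) / fact n)"
    by (simp add: sum_divide_distrib add_divide_distrib)
  also have "\<dots> = (\<Sum>i<d. P d (v(i := v i - 1)) + P d (v(i := v i + 1))) $f n"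
    by (simp add: fps_sum_nth P_def)
  finally show "fps_deriv (P d v) $f n = (\<Sum>i<d. P d (v(i := v i - 1)) + P d (v(i := v i + 1))) $f n" .
qed

lemma P_0: "P d v $f 0 = (if \<forall>i<d. v i = 0 then 1 else 0)"
  by (simp add: P_def)

lemma fam_unique:
  fixes F G :: "(nat \<Rightarrow> int) \<Rightarrow> real fps"
  assumes F0: "\<And>v. F v $f 0 = G v $f 0"
    and dF: "\<And>v. fps_deriv (F v) = (\<Sum>i<d. F (v(i := v i - 1)) + F (v(i := v i + 1)))"
    and dG: "\<And>v. fps_deriv (G v) = (\<Sum>i<d. G (v(i := v i - 1)) + G (v(i := v i + 1)))"
  shows "F v $f n = G v $f n"
proof (induction n arbitrary: v)
  case 0 then show ?case by (rule F0)
next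
  case (Suc n)
  have "of_nat (Suc n) * F v $f Suc n = fps_deriv (F v) $f n" by simp
  also have "\<dots> = (\<Sum>i<d. F (v(i := v i - 1)) $f n + F (v(i := v i + 1)) $f n)"
    by (simp add: dF fps_sum_nth)
  also have "\<dots> = (\<Sum>i<d. G (v(i := v i - 1)) $f n + G (v(i := v i + 1)) $f n)"
    by (simp only: Suc.IH)
  also have "\<dots> = fps_deriv (G v) $f n" by (simp add: dG fps_sum_nth)
  also have "\<dots> = of_nat (Suc n) * G v $f Suc n" by simp
  finally show ?case by simp
qed

lemma fps_deriv_prod_lessThan:
  fixes F :: "nat \<Rightarrow> real fps"
  shows "fps_deriv (\<Prod>i<d. F i) = (\<Sum>i<d. fps_deriv (F i) * (\<Prod>j\<in>{..<d}-{i}. F j))"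
proof (induction d)
  case 0 then show ?case by simp
next
  case (Suc d)
  have A: "(\<Prod>j\<in>{..<Suc d}-{i}. F j) = (\<Prod>j\<in>{..<d}-{i}. F j) * F d" if "i < d" for i
  proof -
    have "{..<Suc d}-{i} = insert d ({..<d}-{i})" using that by auto
    then show ?thesis by (simp add: mult.commute)
  qed
  have Bq: "{..<Suc d}-{d} = {..<d}" by auto
  have "fps_deriv (\<Prod>i<Suc d. F i) = fps_deriv (\<Prod>i<d. F i) * F d + (\<Prod>i<d. F i) * fps_deriv (F d)"
    by simp
  also have "fps_deriv (\<Prod>i<d. F i) * F d = (\<Sum>i<d. fps_deriv (F i) * (\<Prod>j\<in>{..<Suc d}-{i}. F j))"
    unfolding Suc.IH sum_distrib_right by (rule sum.cong) (auto simp: A mult.assoc)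
  also have "(\<Prod>i<d. F i) * fps_deriv (F d) = fps_deriv (F d) * (\<Prod>j\<in>{..<Suc d}-{d}. F j)"
    unfolding Bq by (simp add: mult.commute)
  finally show ?case by simp
qed

lemma prod_nth_0: "(\<Prod>i<(d::nat). F i) $f 0 = (\<Prod>i<d. (F i :: real fps) $f 0)"
  by (induction d) auto

definition Q :: "nat \<Rightarrow> (nat \<Rightarrow> int) \<Rightarrow> real fps" where
  "Q d v = (\<Prod>i<d. B (v i))"

lemma Q_upd: "i < d \<Longrightarrow> Q d (v(i := x)) = B x * (\<Prod>j\<in>{..<d}-{i}. B (v j))"
proof -
  assume i: "i < d"
  have 1: "Q d (v(i := x)) = B ((v(i:=x)) i) * (\<Prod>j\<in>{..<d}-{i}. B ((v(i:=x)) j))"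
    unfolding Q_def by (rule prod.remove[where g="\<lambda>j. B ((v(i:=x)) j)"]) (use i in auto)
  have 2: "(\<Prod>j\<in>{..<d}-{i}. B ((v(i:=x)) j)) = (\<Prod>j\<in>{..<d}-{i}. B (v j))"
    by (rule prod.cong) auto
  from 1 2 show ?thesis by (simp only: fun_upd_same)
qed

lemma Q_deriv: "fps_deriv (Q d v) = (\<Sum>i<d. Q d (v(i := v i - 1)) + Q d (v(i := v i + 1)))"
proof -
  have "fps_deriv (Q d v) = (\<Sum>i<d. (B (v i - 1) + B (v i + 1)) * (\<Prod>j\<in>{..<d}-{i}. B (v j)))"
    unfolding Q_def fps_deriv_prod_lessThan B_deriv ..
  also have "\<dots> = (\<Sum>i<d. Q d (v(i := v i - 1)) + Q d (v(i := v i + 1)))"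
    by (rule sum.cong) (auto simp: Q_upd distrib_right)
  finally show ?thesis .
qed

lemma Q_0: "Q d v $f 0 = (if \<forall>i<d. v i = 0 then 1 else 0)"
proof (cases "\<forall>i<d. v i = 0")
  case True
  have "(\<Prod>i<d. B (v i) $f 0) = (\<Prod>i<d. 1)"
    by (rule prod.cong) (use True in \<open>auto simp: Bnth0\<close>)
  then show ?thesis using True unfolding Q_def prod_nth_0 by simp
next
  case False
  then obtain i where "i < d" "v i \<noteq> 0" by auto
  then have z: "(\<Prod>i<d. B (v i) $f 0) = 0" by (intro prod_zero) (auto simp: Bnth0)
  show ?thesis unfolding Q_def prod_nth_0 if_not_P[OF False] by (rule z)
qed

lemma P_eq_Q: "P d v = Q d v"
  by (rule fps_ext, rule fam_unique[where d=d, OF _ P_deriv Q_deriv]) (simp add: P_0 Q_0)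




lemma ac_mult:
  fixes F G :: "real fps" and x :: real
  assumes aF: "summable (\<lambda>n. norm (F $f n * x^n))" and aG: "summable (\<lambda>n. norm (G $f n * x^n))"
  shows "summable (\<lambda>n. norm ((F*G) $f n * x^n))"
    and "(\<lambda>n. (F*G) $f n * x^n) sums ((\<Sum>n. F $f n * x^n) * (\<Sum>n. G $f n * x^n))"
proof -
  let ?a = "\<lambda>k. F $f k * x^k" and ?b = "\<lambda>k. G $f k * x^k"
  have eq: "(F*G) $f k * x^k = (\<Sum>i\<le>k. ?a i * ?b (k-i))" for k
  proof -
    have "(F*G) $f k * x^k = (\<Sum>i\<le>k. F $f i * G $f (k-i) * x^k)"
      by (simp add: fps_mult_nth atLeast0AtMost sum_distrib_right)
    also have "\<dots> = (\<Sum>i\<le>k. ?a i * ?b (k-i))"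
      by (rule sum.cong[OF refl]) (simp add: power_add[symmetric] mult_ac)
    finally show ?thesis .
  qed
  show "(\<lambda>n. (F*G) $f n * x^n) sums ((\<Sum>n. F $f n * x^n) * (\<Sum>n. G $f n * x^n))"
    unfolding eq by (rule Cauchy_product_sums[OF aF aG])
  have s: "summable (\<lambda>k. \<Sum>i\<le>k. norm (?a i) * norm (?b (k-i)))"
    by (rule summable_Cauchy_product) (use aF aG in simp_all)
  show "summable (\<lambda>n. norm ((F*G) $f n * x^n))"
  proof (rule summable_comparison_test[OF _ s])
    show "\<exists>N. \<forall>n\<ge>N. norm (norm ((F*G) $f n * x^n)) \<le> (\<Sum>i\<le>n. norm (?a i) * norm (?b (n-i)))"
    proof (intro exI allI impI)
      fix n
      have "norm (norm ((F*G) $f n * x^n)) = norm (\<Sum>i\<le>n. ?a i * ?b (n-i))" by (simp add: eq)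
      also have "\<dots> \<le> (\<Sum>i\<le>n. norm (?a i * ?b (n-i)))" by (rule norm_sum)
      also have "\<dots> = (\<Sum>i\<le>n. norm (?a i) * norm (?b (n-i)))" by (simp add: abs_mult)
      finally show "norm (norm ((F*G) $f n * x^n)) \<le> (\<Sum>i\<le>n. norm (?a i) * norm (?b (n-i)))" .
    qed
  qed
qed

lemma bc_bound: "\<bar>bc c N\<bar> \<le> 2^N / fact N"
proof (cases "bc c N = 0")
  case True then show ?thesis by simp
next
  case False
  then obtain a b where ab: "N = a + b" "c = int a - int b" using bc_ex by blast
  have v: "bc c N = 1 / (fact a * fact b)" using ab bc_val by simp
  have f: "fact a * fact b * (N choose a) = fact N"
    using binomial_fact_lemma[of a N] ab by simp
  then have "(fact a * fact b :: real) * real (N choose a) = fact N"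
    by (metis of_nat_fact of_nat_mult)
  then have "1 / (fact a * fact b :: real) = real (N choose a) / fact N"
    by (simp add: field_simps)
  also have "\<dots> \<le> 2^N / fact N"
  proof (rule divide_right_mono)
    have "N choose a \<le> 2^N" by (rule binomial_le_pow2)
    then show "real (N choose a) \<le> 2^N" by (metis of_nat_le_iff of_nat_numeral of_nat_power)
  qed simp
  finally show ?thesis using v by simp
qed

lemma B_sums:
  fixes x :: real
  shows "summable (\<lambda>n. norm (B c $f n * x^n))" and "(\<lambda>n. B c $f n * x^n) sums besselI c (2*x)"
proof -
  have ex: "summable (\<lambda>n. (2 * \<bar>x\<bar>)^n / fact n)"
    using exp_converges[of "2 * \<bar>x\<bar>"] by (simp add: sums_iff divide_inverse mult.commute)
  show sa: "summable (\<lambda>n. norm (B c $f n * x^n))"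
  proof (rule summable_comparison_test[OF _ ex], intro exI allI impI)
    fix n
    have "norm (norm (B c $f n * x^n)) = \<bar>bc c n\<bar> * \<bar>x\<bar>^n" by (simp add: B_def abs_mult power_abs)
    also have "\<dots> \<le> 2^n / fact n * \<bar>x\<bar>^n" by (rule mult_right_mono[OF bc_bound]) simp
    also have "\<dots> = (2 * \<bar>x\<bar>)^n / fact n" by (simp add: power_mult_distrib)
    finally show "norm (norm (B c $f n * x^n)) \<le> (2 * \<bar>x\<bar>)^n / fact n" .
  qed
  let ?f = "\<lambda>n. B c $f n * x^n"
  let ?k = "nat \<bar>c\<bar>"
  let ?g = "\<lambda>m. 2 * m + ?k"
  have sf: "?f sums (suminf ?f)" using summable_norm_cancel[OF sa] by (simp add: summable_sums)
  have sm: "strict_mono ?g" by (rule strict_monoI) simp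
  have zero: "?f N = 0" if "N \<notin> range ?g" for N
  proof (rule ccontr)
    assume "?f N \<noteq> 0"
    then have "bc c N \<noteq> 0" by (simp add: B_def)
    then obtain a b where ab: "N = a + b" "c = int a - int b" using bc_ex by blast
    have "N = ?g (min a b)" using ab by (cases "a \<le> b") auto
    with that show False by blast
  qed
  have trm: "?f (?g m) = (2 * x / 2) ^ (2 * m + nat \<bar>c\<bar>) / (fact m * fact (m + nat \<bar>c\<bar>))" for m
  proof (cases "c \<ge> 0")
    case True
    have "bc c (?g m) = bc (int (m + ?k) - int m) ((m + ?k) + m)"
      using True by (intro arg_cong2[where f=bc]) auto
    also have "\<dots> = 1 / (fact (m + ?k) * fact m)" by (rule bc_val)
    finally show ?thesis by (simp add: B_def mult.commute)
  next
    case False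
    have "bc c (?g m) = bc (int m - int (m + ?k)) (m + (m + ?k))"
      using False by (intro arg_cong2[where f=bc]) auto
    also have "\<dots> = 1 / (fact m * fact (m + ?k))" by (rule bc_val)
    finally show ?thesis by (simp add: B_def)
  qed
  have "(\<lambda>m. ?f (?g m)) sums (suminf ?f)"
    using sums_mono_reindex[of ?g ?f, OF sm zero] sf by simp
  then have "(\<lambda>m. (2 * x / 2) ^ (2 * m + nat \<bar>c\<bar>) / (fact m * fact (m + nat \<bar>c\<bar>))) sums (suminf ?f)"
    by (simp only: trm)
  then have "besselI c (2*x) = suminf ?f" unfolding besselI_def by (simp add: sums_iff)
  with sf show "?f sums besselI c (2*x)" by simp
qed

lemma Q_Suc: "Q (Suc d) v = Q d v * B (v d)"
  by (simp add: Q_def)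

lemma Q_sums:
  fixes x :: real
  shows "summable (\<lambda>n. norm (Q d v $f n * x^n)) \<and> (\<lambda>n. Q d v $f n * x^n) sums (\<Prod>i<d. besselI (v i) (2*x))"
proof (induction d)
  case 0
  have e: "(\<lambda>n. Q 0 v $f n * x^n) = (\<lambda>n. if n = 0 then 1 else 0)" by (simp add: Q_def fun_eq_iff)
  have "(\<lambda>n. if n = 0 then 1 else 0) sums (1::real)" using sums_single[of 0 "\<lambda>_. 1::real"] by simp
  moreover have "summable (\<lambda>n. norm (Q 0 v $f n * x^n))"
    by (rule summable_finite[of "{0}"]) (auto simp: Q_def)
  ultimately show ?case unfolding e by simp
next
  case (Suc d)
  have sB: "summable (\<lambda>n. norm (B (v d) $f n * x^n))" and tB: "(\<lambda>n. B (v d) $f n * x^n) sums besselI (v d) (2*x)"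
    using B_sums by blast+
  from Suc.IH have sQ: "summable (\<lambda>n. norm (Q d v $f n * x^n))" and tQ: "(\<lambda>n. Q d v $f n * x^n) sums (\<Prod>i<d. besselI (v i) (2*x))"
    by blast+
  have "(\<lambda>n. (Q d v * B (v d)) $f n * x^n) sums ((\<Sum>n. Q d v $f n * x^n) * (\<Sum>n. B (v d) $f n * x^n))"
    by (rule ac_mult(2)[OF sQ sB])
  also have "(\<Sum>n. Q d v $f n * x^n) = (\<Prod>i<d. besselI (v i) (2*x))" using tQ by (simp add: sums_iff)
  also have "(\<Sum>n. B (v d) $f n * x^n) = besselI (v d) (2*x)" using tB by (simp add: sums_iff)
  finally have "(\<lambda>n. Q (Suc d) v $f n * x^n) sums (\<Prod>i<Suc d. besselI (v i) (2*x))"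
    by (simp add: Q_Suc)
  moreover have "summable (\<lambda>n. norm (Q (Suc d) v $f n * x^n))"
    unfolding Q_Suc by (rule ac_mult(1)[OF sQ sB])
  ultimately show ?case by blast
qed

lemma hw_sums:
  fixes x :: real
  shows "(\<lambda>N. real (hw d N v) / fact N * x^N) sums (\<Prod>i<d. besselI (v i) (2*x))"
proof -
  have "(\<lambda>N. Q d v $f N * x^N) sums (\<Prod>i<d. besselI (v i) (2*x))" using Q_sums by blast
  moreover have "Q d v $f N = real (hw d N v) / fact N" for N
    using P_eq_Q[of d v] by (metis P_def fps_nth_Abs_fps)
  ultimately show ?thesis by simp
qed



theorem proposition4:
  fixes d :: nat and mu la :: "int list" and W :: "nat \<Rightarrow> letter list" and x :: real
  assumes "d \<ge> 1"
    and "inW d mu" and "inW d la"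
    and "rankW d mu \<le> rankW d la"
    and "\<And>n. count_list (W n) L = n"
    and "\<And>n. count_list (W n) R = n + nat (rankW d la - rankW d mu)"
  shows "(\<lambda>n. real (Z d (W n) mu la) * x ^ (2*n + nat (rankW d la - rankW d mu))
              / (fact n * fact (n + nat (rankW d la - rankW d mu))))
         sums det (mat d d (\<lambda>(i, j). besselI (la ! i - mu ! j) (2 * x)))"
proof -
  note mu = assms(2) and la = assms(3)
  define k where "k = nat (rankW d la - rankW d mu)"
  have lmu: "length mu = d" and lla: "length la = d" using mu la by (auto simp: inW_def)
  have kk: "int k = sum_list la - sum_list mu" using assms(4) unfolding k_def rankW_def by simp
  let ?S = "{p. p permutes {0..<d}}"
  define v where "v p = (\<lambda>i. la!i - mu!p i)" for p :: "nat \<Rightarrow> nat"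
  have sumv: "(\<Sum>i<d. v p i) = int k" if p: "p permutes {0..<d}" for p
  proof -
    have p': "p permutes {..<d}" using p by (simp add: lessThan_atLeast0)
    have "(\<Sum>i<d. v p i) = (\<Sum>i<d. la!i) - (\<Sum>i<d. mu!p i)" by (simp add: v_def sum_subtractf)
    also have "(\<Sum>i<d. mu!p i) = (\<Sum>i<d. mu!i)"
      using sum.permute[OF p', of "\<lambda>i. mu!i"] by (simp add: o_def)
    finally show ?thesis using kk lmu lla by (simp add: sum_list_nth_int)
  qed
  define T where "T N = (\<Sum>p\<in>?S. of_int (sign p) * (real (hw d N (v p)) / fact N * x^N))" for N
  have det: "det (mat d d (\<lambda>(i, j). besselI (la ! i - mu ! j) (2 * x))) =
      (\<Sum>p\<in>?S. of_int (sign p) * (\<Prod>i<d. besselI (v p i) (2*x)))"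
  proof -
    have "det (mat d d (\<lambda>(i, j). besselI (la ! i - mu ! j) (2 * x))) =
      (\<Sum>p\<in>?S. of_int (sign p) * (\<Prod>i=0..<d. mat d d (\<lambda>(i, j). besselI (la ! i - mu ! j) (2 * x)) $$ (i, p i)))"
      by (rule det_def'[OF mat_carrier])
    also have "\<dots> = (\<Sum>p\<in>?S. of_int (sign p) * (\<Prod>i<d. besselI (v p i) (2*x)))"
    proof (rule sum.cong[OF refl])
      fix p assume "p \<in> ?S"
      then have p: "p permutes {0..<d}" by simp
      have "(\<Prod>i=0..<d. mat d d (\<lambda>(i, j). besselI (la ! i - mu ! j) (2 * x)) $$ (i, p i)) = (\<Prod>i<d. besselI (v p i) (2*x))"
        unfolding lessThan_atLeast0
      proof (rule prod.cong[OF refl])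
        fix i assume "i \<in> {0..<d}"
        moreover then have "p i < d" using p permutes_in_image by fastforce
        ultimately show "mat d d (\<lambda>(i, j). besselI (la ! i - mu ! j) (2 * x)) $$ (i, p i) = besselI (v p i) (2*x)"
          by (simp add: v_def)
      qed
      then show "of_int (sign p) * (\<Prod>i=0..<d. mat d d (\<lambda>(i, j). besselI (la ! i - mu ! j) (2 * x)) $$ (i, p i)) =
           of_int (sign p) * (\<Prod>i<d. besselI (v p i) (2*x))" by simp
    qed
    finally show ?thesis .
  qed
  have Tsums: "T sums det (mat d d (\<lambda>(i, j). besselI (la ! i - mu ! j) (2 * x)))"
    unfolding det T_def
    by (intro sums_sum sums_mult hw_sums)
  have sm: "strict_mono (\<lambda>n. 2 * n + k)" by (rule strict_monoI) simp
  have zero: "T N = 0" if "N \<notin> range (\<lambda>n. 2 * n + k)" for N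
    unfolding T_def
  proof (rule sum.neutral, rule ballI)
    fix p assume "p \<in> ?S"
    then have s: "(\<Sum>i<d. v p i) = int k" using sumv by simp
    have "hw d N (v p) = 0"
    proof (rule ccontr)
      assume "hw d N (v p) \<noteq> 0"
      from hw_par[OF this] s have "k \<le> N" "even (N + k)" by auto
      then have ev: "even (N - k)" by (simp add: even_diff_nat)
      then have "N - k = 2 * ((N - k) div 2)" by simp
      then have "N = 2 * ((N - k) div 2) + k" using \<open>k \<le> N\<close> by linarith
      with that show False by blast
    qed
    then show "of_int (sign p) * (real (hw d N (v p)) / fact N * x^N) = 0" by simp
  qed
  have Tval: "T (2 * n + k) = real (Z d (W n) mu la) * x ^ (2*n + k) / (fact n * fact (n + k))" for n
  proof -
    have c: "real ((2*n+k) choose n) / fact (2*n+k) = 1 / (fact n * fact (n + k))"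
    proof -
      have e: "fact n * fact (n+k) * ((2*n+k) choose n) = (fact (2*n+k) :: nat)"
        using binomial_fact_lemma[of n "2*n+k"] by simp
      have "(fact n * fact (n+k) :: real) * real ((2*n+k) choose n) = fact (2*n+k)"
        using arg_cong[OF e, of real] by (simp only: of_nat_mult of_nat_fact)
      then show ?thesis by (simp add: field_simps)
    qed
    have "T (2*n+k) = (\<Sum>p\<in>?S. of_int (sign p) * (real ((2*n+k) choose n) * real (fw d (W n) (v p)) / fact (2*n+k) * x^(2*n+k)))"
      unfolding T_def
    proof (rule sum.cong[OF refl])
      fix p assume "p \<in> ?S"
      then have s: "(\<Sum>i<d. v p i) = int k" using sumv by simp
      have "hw d (2*n+k) (v p) = ((2*n+k) choose n) * fw d (W n) (v p)"
        by (rule hw_eq[OF s assms(5)]) (simp add: assms(6) k_def)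
      then show "of_int (sign p) * (real (hw d (2*n+k) (v p)) / fact (2*n+k) * x^(2*n+k)) =
        of_int (sign p) * (real ((2*n+k) choose n) * real (fw d (W n) (v p)) / fact (2*n+k) * x^(2*n+k))"
        by simp
    qed
    also have "\<dots> = (real ((2*n+k) choose n) / fact (2*n+k) * x^(2*n+k)) * Aw d (W n) mu la"
      unfolding Aw_def sum_distrib_left by (rule sum.cong[OF refl]) (simp add: v_def)
    also have "Aw d (W n) mu la = real (Z d (W n) mu la)" using Z_eq_Aw[OF mu la] by simp
    finally show ?thesis using c by simp
  qed
  have "(\<lambda>n. T (2 * n + k)) sums det (mat d d (\<lambda>(i, j). besselI (la ! i - mu ! j) (2 * x)))"
    using sums_mono_reindex[of "\<lambda>n. 2 * n + k" T, OF sm zero] Tsums by simp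
  then show ?thesis unfolding k_def[symmetric] Tval .
qed


end
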